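(* Let $y\ge1$ be an integer and $\rho\in(0,1)$. For any probability distribution $G$ supported on $\mathbb{R}_+$, $\theta_G(y;\rho)\ge\rho^2/16$.
   Context: $f_G(y)=\int\frac{\theta^ye^{-\theta}}{y!}G(d\theta)$ for $y\in\{0,1,\dots\}$, $\Delta f_G(y)=f_G(y+1)-f_G(y)$, and $\theta_G(y;\rho)=(y+1)\big(\frac{\Delta f_G(y)}{f_G(y)\vee\rho}+1\big)$. *)

theory Defs
  imports "HOL-Probability.Probability"
begin

definition fG :: "real measure \<Rightarrow> nat \<Rightarrow> real" where
  "fG G y = (\<integral>\<theta>. \<theta> ^ y * exp (- \<theta>) / fact y \<partial>G)"

definition DeltafG :: "real measure \<Rightarrow> nat \<Rightarrow> real" where
  "DeltafG G y = fG G (Suc y) - fG G y"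

definition thetaG :: "real measure \<Rightarrow> nat \<Rightarrow> real \<Rightarrow> real" where
  "thetaG G y \<rho> = real (y + 1) * (DeltafG G y / max (fG G y) \<rho> + 1)"

end

theory Submission
  imports Defs
begin

lemma pow_fact_le_exp:
  fixes x :: real assumes "0 \<le> x"
  shows "x ^ k / fact k \<le> exp x"
proof -
  have "x ^ k / fact k \<le> (\<Sum>n\<le>k. x ^ n / fact n)"
    using assms by (intro member_le_sum) auto
  also have "\<dots> \<le> exp x"
    using assms summable_exp_generic[of x]
    by (auto simp: exp_def divide_inverse ac_simps intro!: sum_le_suminf)
  finally show ?thesis .
qed

lemma pterm_le1:
  fixes x :: real assumes "0 \<le> x"
  shows "x ^ k * exp (- x) / fact k \<le> 1"
proof -
  have "x ^ k * exp (- x) / fact k = (x ^ k / fact k) / exp x"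
    by (simp add: exp_minus field_simps)
  also have "\<dots> \<le> 1" using pow_fact_le_exp[OF assms, of k] by (subst divide_le_eq_1_pos) auto
  finally show ?thesis .
qed

lemma pointwise:
  fixes x c :: real and y :: nat
  assumes "0 \<le> x" "y \<ge> 1" "0 < c" "c < 1"
  shows "0 \<le> real (y + 1) * (x ^ Suc y * exp (- x) / fact (Suc y)) - c * (x ^ y * exp (- x) / fact y) + c\<^sup>2"
proof -
  define p where "p = x ^ y * exp (- x) / fact y"
  have p0: "0 \<le> p" unfolding p_def using assms by simp
  have eq: "real (y + 1) * (x ^ Suc y * exp (- x) / fact (Suc y)) = x * p"
  proof -
    have "real (y + 1) * (x ^ Suc y * exp (- x) / fact (Suc y))
        = (real (y + 1) * (x * (x ^ y * exp (- x)))) / (real (y + 1) * fact y)"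
      by (simp add: fact_Suc del: of_nat_Suc of_nat_add)
    also have "\<dots> = x * p" unfolding p_def
      by (subst mult_divide_mult_cancel_left) auto
    finally show ?thesis .
  qed
  show ?thesis
  proof (cases "c \<le> x")
    case True
    then have "c * p \<le> x * p" using p0 by (simp add: mult_right_mono)
    then show ?thesis unfolding eq p_def[symmetric] by (simp add: power2_eq_square)
  next
    case False
    have "x ^ y \<le> x ^ 1" using assms False by (intro power_decreasing) auto
    then have xy: "x ^ y \<le> x" by simp
    have "exp (- x) \<le> 1" using assms by simp
    have "fact y \<ge> (1::real)" by simp
    have "p \<le> x ^ y * exp (- x)" unfolding p_def
      using divide_left_mono[of 1 "fact y" "x ^ y * exp (- x)"] \<open>fact y \<ge> (1::real)\<close> assms by simp
    also have "\<dots> \<le> x ^ y" using \<open>exp (- x) \<le> 1\<close> assms by (simp add: mult_left_le)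
    finally have "p \<le> c" using xy False by simp
    then have "(c - x) * p \<le> c * c" using False p0 assms
      by (intro mult_mono) auto
    then show ?thesis unfolding eq p_def[symmetric] by (simp add: power2_eq_square algebra_simps)
  qed
qed

theorem lemma4:
  fixes G :: "real measure" and y :: nat and \<rho> :: real
  assumes "prob_space G" and "sets G = sets borel"
    and "AE \<theta> in G. \<theta> \<ge> 0"
    and "y \<ge> 1" and "0 < \<rho>" and "\<rho> < 1"
  shows "thetaG G y \<rho> \<ge> \<rho>\<^sup>2 / 16"
proof -
  interpret prob_space G by fact
  have meas: "(\<lambda>\<theta>. \<theta> ^ k * exp (- \<theta>) / fact k) \<in> borel_measurable G" for k
    by (subst measurable_cong_sets[OF assms(2) refl]) measurable
  have int: "integrable G (\<lambda>\<theta>. \<theta> ^ k * exp (- \<theta>) / fact k)" for k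
  proof (rule integrable_const_bound[where B=1])
    show "AE x in G. norm (x ^ k * exp (- x) / fact k) \<le> 1"
      using assms(3) by eventually_elim (use pterm_le1 in auto)
  qed (rule meas)
  define f where "f = fG G y"
  define f1 where "f1 = fG G (Suc y)"
  define c where "c = \<rho> / 4"
  have f0: "0 \<le> f" unfolding f_def fG_def
    using assms(3) by (intro integral_nonneg_AE) (auto elim!: eventually_mono)
  have f1_0: "0 \<le> f1" unfolding f1_def fG_def
    using assms(3) by (intro integral_nonneg_AE) (auto elim!: eventually_mono)
  have fle1: "f \<le> 1"
  proof -
    have "f \<le> (\<integral>\<theta>. 1 \<partial>G)" unfolding f_def fG_def
    proof (intro integral_mono_AE int)
      show "AE x in G. x ^ y * exp (- x) / fact y \<le> 1"
        using assms(3) by (rule eventually_mono) (rule pterm_le1)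
    qed simp
    then show ?thesis by (simp add: prob_space)
  qed
  have key: "0 \<le> real (y + 1) * f1 - c * f + c\<^sup>2"
  proof -
    have "(\<integral>\<theta>. real (y + 1) * (\<theta> ^ Suc y * exp (- \<theta>) / fact (Suc y)) - c * (\<theta> ^ y * exp (- \<theta>) / fact y) + c\<^sup>2 \<partial>G)
       = real (y + 1) * f1 - c * f + c\<^sup>2"
    proof -
      let ?P = "\<lambda>k \<theta>. \<theta> ^ k * exp (- \<theta>) / fact k"
      have i1: "integrable G (\<lambda>\<theta>. real (y + 1) * ?P (Suc y) \<theta>)" using int[of "Suc y"] by (rule integrable_mult_right)
      have i2: "integrable G (\<lambda>\<theta>. c * ?P y \<theta>)" using int[of y] by (rule integrable_mult_right)
      have "(\<integral>\<theta>. real (y + 1) * ?P (Suc y) \<theta> - c * ?P y \<theta> + c\<^sup>2 \<partial>G)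
          = (\<integral>\<theta>. real (y + 1) * ?P (Suc y) \<theta> - c * ?P y \<theta> \<partial>G) + (\<integral>\<theta>. c\<^sup>2 \<partial>G)"
        by (intro Bochner_Integration.integral_add Bochner_Integration.integrable_diff i1 i2 integrable_const)
      also have "(\<integral>\<theta>. real (y + 1) * ?P (Suc y) \<theta> - c * ?P y \<theta> \<partial>G)
          = (\<integral>\<theta>. real (y + 1) * ?P (Suc y) \<theta> \<partial>G) - (\<integral>\<theta>. c * ?P y \<theta> \<partial>G)"
        by (rule Bochner_Integration.integral_diff[OF i1 i2])
      also have "(\<integral>\<theta>. real (y + 1) * ?P (Suc y) \<theta> \<partial>G) = real (y + 1) * f1"
        unfolding f1_def fG_def by (rule integral_mult_right_zero)
      also have "(\<integral>\<theta>. c * ?P y \<theta> \<partial>G) = c * f"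
        unfolding f_def fG_def by (rule integral_mult_right_zero)
      also have "(\<integral>\<theta>. c\<^sup>2 \<partial>G) = c\<^sup>2" by (simp add: prob_space)
      finally show ?thesis .
    qed
    moreover have "0 \<le> (\<integral>\<theta>. real (y + 1) * (\<theta> ^ Suc y * exp (- \<theta>) / fact (Suc y)) - c * (\<theta> ^ y * exp (- \<theta>) / fact y) + c\<^sup>2 \<partial>G)"
    proof (intro integral_nonneg_AE)
      have "0 < c" "c < 1" using assms(5,6) unfolding c_def by auto
      note cc = this
      show "AE \<theta> in G. 0 \<le> real (y + 1) * (\<theta> ^ Suc y * exp (- \<theta>) / fact (Suc y)) - c * (\<theta> ^ y * exp (- \<theta>) / fact y) + c\<^sup>2"
        using assms(3) by (rule eventually_mono) (rule pointwise[OF _ assms(4) cc])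
    qed
    ultimately show ?thesis by simp
  qed
  have th: "thetaG G y \<rho> = real (y + 1) * (f1 / max f \<rho>) + real (y + 1) * (1 - f / max f \<rho>)"
    unfolding thetaG_def DeltafG_def f_def f1_def using assms(5)
    by (simp add: field_simps)
  have m0: "0 < max f \<rho>" using assms(5) by simp
  have t1: "0 \<le> real (y + 1) * (f1 / max f \<rho>)" using f1_0 m0 by simp
  have fm: "f / max f \<rho> \<le> 1" using m0 by (simp add: divide_le_eq_1)
  have t2: "0 \<le> real (y + 1) * (1 - f / max f \<rho>)" using fm by simp
  show ?thesis
  proof (cases "f \<le> \<rho> / 2")
    case True
    then have "max f \<rho> = \<rho>" using assms(5) by simp
    then have "1 - f / max f \<rho> \<ge> 1 / 2" using True assms(5) by (simp add: field_simps)
    moreover have "real (y + 1) \<ge> 1" by simp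
    ultimately have "1 / 2 * 1 \<le> (1 - f / max f \<rho>) * real (y + 1)"
      by (intro mult_mono) (use fm in \<open>auto simp del: of_nat_add of_nat_Suc\<close>)
    then have "real (y + 1) * (1 - f / max f \<rho>) \<ge> 1 / 2" by (simp add: mult.commute)
    moreover have "\<rho>\<^sup>2 / 16 \<le> 1 / 2" using assms(5,6)
    proof -
      have "\<rho>\<^sup>2 \<le> 1" using assms(5,6) by (intro power_le_one) auto
      then show ?thesis by simp
    qed
    ultimately show ?thesis using th t1 by linarith
  next
    case False
    have "max f \<rho> \<le> 1" using fle1 assms(6) by simp
    have "c * (2 * c) \<le> c * f" using False assms(5) unfolding c_def
      by (intro mult_left_mono) auto
    then have A: "real (y + 1) * f1 \<ge> c * c" using key
      by (simp add: power2_eq_square)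
    have "real (y + 1) * f1 / max f \<rho> \<ge> real (y + 1) * f1"
      using \<open>max f \<rho> \<le> 1\<close> m0 A f1_0 by (simp add: le_divide_eq mult_left_le)
    then have "real (y + 1) * (f1 / max f \<rho>) \<ge> c * c" using A by simp
    moreover have "c * c = \<rho>\<^sup>2 / 16" unfolding c_def by (simp add: power2_eq_square)
    ultimately show ?thesis using th t2 by linarith
  qed
qed

end
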